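(* Let $\{\tau_n\}\subset\mathscr{M}_{\mathbb{R}^d}^{\mathbf{0}}$ satisfy conditions (I) and (II) (equivalently, (III) and (IV)), and let $\tau$ be the measure in (III). Put $\rho_n=\tau_nW^{-1}$ and $\rho=1_{\mathbb{T}^d\setminus\{\mathbf{1}\}}(\tau W^{-1})$. Then $\{\rho_n\}$ satisfies conditions (iii) and (iv) with limit measure $\rho$ in (iii) (and hence also conditions (i) and (ii)). Moreover, $\tau_n$ and $\rho_n$ determine the same quadratic form on $\mathbb{Z}^d$; in particular the matrix $\mathbf{A}$ with $Q(\boldsymbol u)=\langle\mathbf{A}\boldsymbol u,\boldsymbol u\rangle$ in (IV) coincides with the one representing $Q$ in (iv).
   Context: $W:\mathbb{R}^d\to\mathbb{T}^d$, $W(\boldsymbol x)=e^{i\boldsymbol x}=(e^{ix_1},\dots,e^{ix_d})$; $\tau W^{-1}$ is the push-forward. $\mathscr{M}_{\mathbb{R}^d}^{\mathbf{0}}$ (resp. $\mathscr{M}_{\mathbb{T}^d}^{\mathbf{1}}$): positive Borel measures finite on Borel sets bounded away from $\mathbf{0}$ (resp. $\mathbf{1}$); $\mathscr{M}_{\mathbf{X}}$: finite positive Borel measures; $\tau_n\Rightarrow_{\mathbf{0}}\tau$ means $\int f\,d\tau_n\to\int f\,d\tau$ for bounded continuous $f$ with support bounded away from $\mathbf{0}$ (similarly $\Rightarrow_{\mathbf{1}}$). $\mathscr{V}_\epsilon=\{\boldsymbol x\in\mathbb{R}^d:\|\boldsymbol x\|<\epsilon\}$, $\mathscr{U}_\epsilon=\{\boldsymbol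 s\in\mathbb{T}^d:\|\arg\boldsymbol s\|<\epsilon\}$ with $\arg\in(-\pi,\pi]$ componentwise. Conditions on $\{\tau_n\}$: (I) for each $j$, $d\sigma_{nj}=\frac{x_j^2}{1+x_j^2}d\tau_n$ is finite and converges weakly to some finite $\sigma_j$; (II) $\lim_n\int\frac{x_jx_\ell}{(1+x_j^2)(1+x_\ell^2)}d\tau_n$ exists in $\mathbb{R}$ for all $j,\ell$; (III) there is $\tau\in\mathscr{M}_{\mathbb{R}^d}^{\mathbf{0}}$ with $\tau(\{\mathbf{0}\})=0$ and $\tau_n\Rightarrow_{\mathbf{0}}\tau$; (IV) for every $\boldsymbol u\in\mathbb{R}^d$, $\lim_{\epsilon\to0}\limsup_n\int_{\mathscr{V}_\epsilon}\langle\boldsymbol u,\boldsymbol x\rangle^2d\tau_n=\lim_{\epsilon\to0}\liminf_n\int_{\mathscr{V}_\epsilon}\langle\boldsymbol u,\boldsymbol x\rangle^2d\tau_n=:Q(\boldsymbol u)\in\mathbb{R}$ (then $Q(\boldsymbol u)=\langle\mathbf{A}\boldsymbol u,\boldsymbol u\rangle$ for a positive semi-definite $\mathbf{A}$). Conditions on $\{\rho_n\}\subset\mathscr{M}_{\mathbb{T}^d}^{\mathbf{1}}$: (i) $d\lambda_{nj}=(1-\Re s_j)d\rho_n$ is finite and converges weakly to a finite $\lambda_j$; (ii) $\lim_n\int(\Im s_j)(\Im s_\ell)d\rho_n$ exists in $\mathbb{R}$; (iii) there is $\rho\in\mathscr{M}_{\mathbb{T}^d}^{\mathbf{1}}$ with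 $\rho(\{\mathbf{1}\})=0$ and $\rho_n\Rightarrow_{\mathbf{1}}\rho$; (iv) for every $\boldsymbol p\in\mathbb{Z}^d$, $\lim_{\epsilon\to0}\limsup_n\int_{\mathscr{U}_\epsilon}\langle\boldsymbol p,\Im\boldsymbol s\rangle^2d\rho_n=\lim_{\epsilon\to0}\liminf_n\int_{\mathscr{U}_\epsilon}\langle\boldsymbol p,\Im\boldsymbol s\rangle^2d\rho_n=:Q(\boldsymbol p)\in\mathbb{R}$. *)

theory Defs
  imports "HOL-Probability.Probability"
begin

definition torus :: "(complex^'d) set" where
  "torus = {s. \<forall>j. norm (s$j) = 1}"

definition one_t :: "complex^'d" where
  "one_t = (\<chi> j. 1)"

definition Wmap :: "real^'d \<Rightarrow> complex^'d" where
  "Wmap x = (\<chi> j. exp (\<i> * complex_of_real (x$j)))"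

definition arg_vec :: "complex^'d \<Rightarrow> real^'d" where
  "arg_vec s = (\<chi> j. Arg (s$j))"

definition Im_vec :: "complex^'d \<Rightarrow> real^'d" where
  "Im_vec s = (\<chi> j. Im (s$j))"

definition bounded_away :: "'a::metric_space set \<Rightarrow> 'a \<Rightarrow> bool" where
  "bounded_away A c \<longleftrightarrow> (\<exists>\<epsilon>>0. \<forall>x\<in>A. \<epsilon> \<le> dist x c)"

text \<open>Positive Borel measures on S (a Borel subset of a metric space) that are
  finite on Borel sets bounded away from c: the classes M^0_{R^d} and M^1_{T^d}.\<close>

definition M_away :: "'a::metric_space set \<Rightarrow> 'a \<Rightarrow> 'a measure \<Rightarrow> bool" where
  "M_away S c M \<longleftrightarrow> sets M = sets (restrict_space borel S) \<and>
     (\<forall>A\<in>sets M. bounded_away A c \<longrightarrow> emeasure M A < \<infinity>)"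

text \<open>Convergence "=>_c": integrals of bounded continuous real functions on S whose
  support is bounded away from c (i.e. which vanish near c) converge.\<close>

definition weak_conv_away ::
  "'a::metric_space set \<Rightarrow> 'a \<Rightarrow> (nat \<Rightarrow> 'a measure) \<Rightarrow> 'a measure \<Rightarrow> bool" where
  "weak_conv_away S c Ms M \<longleftrightarrow>
     (\<forall>f::'a \<Rightarrow> real. continuous_on S f \<longrightarrow> bounded (f ` S) \<longrightarrow>
        (\<exists>\<epsilon>>0. \<forall>x\<in>S. dist x c < \<epsilon> \<longrightarrow> f x = 0) \<longrightarrow>
        (\<lambda>n. \<integral>x. f x \<partial>Ms n) \<longlonglongrightarrow> (\<integral>x. f x \<partial>M))"

text \<open>The quadratic-form condition (IV)/(iv): with neighbourhoods U eps of the base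
  point, lim_{eps->0} limsup_n int_{U eps} g d(Ms n) =
  lim_{eps->0} liminf_n int_{U eps} g d(Ms n) = q, a (necessarily nonnegative) real.\<close>

definition quad_limit ::
  "('a \<Rightarrow> real) \<Rightarrow> (real \<Rightarrow> 'a set) \<Rightarrow> (nat \<Rightarrow> 'a measure) \<Rightarrow> real \<Rightarrow> bool" where
  "quad_limit g U Ms q \<longleftrightarrow> 0 \<le> q \<and>
     ((\<lambda>\<epsilon>. limsup (\<lambda>n. \<integral>\<^sup>+x\<in>U \<epsilon>. ennreal (g x) \<partial>Ms n)) \<longlongrightarrow> ennreal q) (at_right 0) \<and>
     ((\<lambda>\<epsilon>. liminf (\<lambda>n. \<integral>\<^sup>+x\<in>U \<epsilon>. ennreal (g x) \<partial>Ms n)) \<longlongrightarrow> ennreal q) (at_right 0)"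

end

theory Submission
  imports Defs
begin


lemma Wmap_torus: "Wmap x \<in> torus" by (simp add: Wmap_def torus_def)

lemma cont_Wmap: "continuous_on UNIV Wmap"
  unfolding Wmap_def by (intro continuous_on_vec_lambda continuous_intros)

lemma norm_iexp_sub1: "cmod (exp (\<i> * complex_of_real t) - 1) \<le> \<bar>t\<bar>"
proof -
  have "cmod (exp (\<i> * complex_of_real t) - 1) = 2 * \<bar>sin (t / 2)\<bar>" by (rule dist_exp_i_1)
  also have "\<dots> \<le> 2 * \<bar>t/2\<bar>" using abs_sin_x_le_abs_x[of "t/2"] by simp
  finally show ?thesis by simp
qed

lemma dist_Wmap: "dist (Wmap x) one_t \<le> norm x"
proof -
  have "dist (Wmap x) one_t = L2_set (\<lambda>i. dist (Wmap x $ i) (one_t $ i)) UNIV"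
    by (simp add: dist_vec_def)
  also have "\<dots> \<le> L2_set (\<lambda>i. norm (x $ i)) UNIV"
    by (rule L2_set_mono) (auto simp: Wmap_def one_t_def dist_norm norm_iexp_sub1)
  also have "\<dots> = norm x" by (simp add: norm_vec_def)
  finally show ?thesis .
qed

lemma closed_torus: "closed (torus :: (complex^'d) set)"
proof -
  have "(torus :: (complex^'d) set) = (\<Inter>j. {s. norm (s $ j) = 1})" by (auto simp: torus_def)
  moreover have "closed (\<Inter>j. {s::complex^'d. norm (s $ j) = 1})"
    by (intro closed_INT ballI closed_Collect_eq continuous_intros)
  ultimately show ?thesis by simp
qed

lemma torus_borel: "torus \<in> sets borel" by (rule borel_closed[OF closed_torus])

lemma one_t_torus: "one_t \<in> torus" by (simp add: one_t_def torus_def)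

lemma Wmap_meas: "Wmap \<in> borel \<rightarrow>\<^sub>M restrict_space borel torus"
  by (rule measurable_restrict_space2) (auto simp: Wmap_torus intro: borel_measurable_continuous_onI cont_Wmap)

lemma Arg_meas: "Arg \<in> borel_measurable borel"
proof -
  have "(\<lambda>z. if z \<in> - \<real>\<^sub>\<le>\<^sub>0 then Arg z else pi) \<in> borel_measurable borel"
    apply (rule borel_measurable_continuous_on_if)
    using closed_nonpos_Reals_complex
    by (auto intro!: continuous_at_imp_continuous_on continuous_at_Arg simp: continuous_on_const)
  then show ?thesis
    apply (rule measurable_discrete_difference[where X="{0}"])
    by (auto simp: Arg_real elim!: nonpos_Reals_cases)
qed

lemma arg_norm_meas: "(\<lambda>s::complex^'d. norm (arg_vec s)) \<in> borel_measurable borel"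
proof -
  have [measurable]: "(\<lambda>s::complex^'d. Arg (s $ j)) \<in> borel_measurable borel" for j
    by (rule measurable_compose[OF _ Arg_meas]) (intro borel_measurable_continuous_onI continuous_intros)
  show ?thesis unfolding norm_vec_def L2_set_def arg_vec_def by simp
qed


lemma arg_vec_Wmap: assumes "norm x < pi" shows "arg_vec (Wmap x) = x"
proof -
  have "Arg (exp (\<i> * complex_of_real (x$j))) = x$j" for j
  proof -
    have "\<bar>x$j\<bar> < pi" using component_le_norm_cart[of x j] assms by linarith
    then show ?thesis by (subst Arg_exp) auto
  qed
  then show ?thesis by (simp add: arg_vec_def Wmap_def vec_eq_iff)
qed

definition sv :: "real^'d \<Rightarrow> real^'d" where "sv x = (\<chi> j. sin (x$j))"

lemma Im_vec_Wmap: "Im_vec (Wmap x) = sv x"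
  by (simp add: Im_vec_def Wmap_def sv_def Im_exp)

lemma norm_sv_arg: "norm (sv x) \<le> norm (arg_vec (Wmap x))"
proof -
  have "\<bar>sin (x$j)\<bar> \<le> \<bar>Arg (exp (\<i> * complex_of_real (x$j)))\<bar>" for j
  proof -
    have "sin (Arg (exp (\<i> * complex_of_real (x$j)))) = sin (x$j)"
      by (subst sin_Arg) (auto simp: Im_exp)
    then show ?thesis using abs_sin_x_le_abs_x[of "Arg (exp (\<i> * complex_of_real (x$j)))"] by simp
  qed
  then show ?thesis unfolding norm_vec_def sv_def arg_vec_def Wmap_def
    by (intro L2_set_mono) auto
qed

lemma norm_sv: "norm (sv x) \<le> norm x"
  unfolding norm_vec_def sv_def by (intro L2_set_mono) (auto simp: abs_sin_x_le_abs_x)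

lemma sin_err: "\<bar>sin t - t\<bar> \<le> (t::real)^2"
proof -
  have "\<bar>sin t - (\<Sum>m<2. sin_coeff m * t ^ m)\<bar> \<le> inverse (fact 2) * \<bar>t\<bar> ^ 2"
    by (rule Maclaurin_sin_bound)
  moreover have "(\<Sum>m<2. sin_coeff m * t ^ m) = t" by (simp add: numeral_2_eq_2 sin_coeff_def)
  ultimately have "\<bar>sin t - t\<bar> * 2 \<le> t^2" by (simp add: power2_abs)
  moreover have "0 \<le> \<bar>sin t - t\<bar>" by simp
  ultimately show ?thesis by (smt (verit))
qed

lemma norm_sq_sum: "(norm (x::real^'d))^2 = (\<Sum>j\<in>UNIV. (x$j)^2)"
  unfolding norm_vec_def L2_set_def by (simp add: sum_nonneg)

lemma norm_sv_minus: "norm (sv x - x) \<le> (norm x)^2"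
proof -
  have "norm (sv x - x) = L2_set (\<lambda>j. \<bar>sin (x$j) - x$j\<bar>) UNIV"
    by (simp add: norm_vec_def sv_def)
  also have "\<dots> \<le> L2_set (\<lambda>j. (x$j)^2) UNIV"
    by (intro L2_set_mono) (auto simp: sin_err)
  also have "\<dots> \<le> (\<Sum>j\<in>UNIV. (x$j)^2)" by (rule L2_set_le_sum) auto
  finally show ?thesis by (simp add: norm_sq_sum)
qed

lemma sq_diff_bound: "\<bar>(p \<bullet> sv x)^2 - (p \<bullet> x)^2\<bar> \<le> 2 * (norm p)^2 * (norm x)^3"
proof -
  have "\<bar>(p \<bullet> sv x)^2 - (p \<bullet> x)^2\<bar> = \<bar>p \<bullet> (sv x - x)\<bar> * \<bar>p \<bullet> (sv x + x)\<bar>"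
    by (simp add: inner_diff_right inner_add_right power2_eq_square abs_mult[symmetric] algebra_simps)
  also have "\<dots> \<le> (norm p * (norm x)^2) * (norm p * (2 * norm x))"
  proof (rule mult_mono)
    show "\<bar>p \<bullet> (sv x - x)\<bar> \<le> norm p * (norm x)^2"
      using Cauchy_Schwarz_ineq2[of p "sv x - x"] norm_sv_minus[of x]
      by (meson mult_left_mono norm_ge_zero order_trans)
    have "norm (sv x + x) \<le> 2 * norm x" using norm_triangle_ineq[of "sv x" x] norm_sv[of x] by linarith
    then show "\<bar>p \<bullet> (sv x + x)\<bar> \<le> norm p * (2 * norm x)"
      using Cauchy_Schwarz_ineq2[of p "sv x + x"]
      by (meson mult_left_mono norm_ge_zero order_trans)
  qed auto
  also have "\<dots> = 2 * (norm p)^2 * (norm x)^3" by (simp add: power2_eq_square power3_eq_cube)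
  finally show ?thesis .
qed


definition phi :: "real^'d \<Rightarrow> real" where "phi x = min 1 (max 0 (2 * norm x / pi - 1))"

lemma phi_nonneg: "0 \<le> phi x" by (simp add: phi_def)
lemma phi_le1: "phi x \<le> 1" by (simp add: phi_def)
lemma phi_one: "pi \<le> norm x \<Longrightarrow> phi x = 1"
proof -
  assume a: "pi \<le> norm x"
  have "1 \<le> 2 * norm x / pi - 1" using a pi_gt3 by (simp add: field_simps)
  then show ?thesis by (simp add: phi_def)
qed
lemma phi_zero: "norm x < 1 \<Longrightarrow> phi x = 0"
proof -
  assume "norm x < 1"
  then have "2 * norm x / pi \<le> 1" using pi_gt3 by (simp add: field_simps)
  then show ?thesis by (simp add: phi_def)
qed
lemma phi_cont: "continuous_on UNIV phi"
  unfolding phi_def by (intro continuous_intros) auto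

lemma pointwise:
  fixes p x :: "real^'d"
  assumes e: "0 < e" "e < d" "d \<le> 1"
  defines "gB \<equiv> (p \<bullet> Im_vec (Wmap x))^2 * indicator {s\<in>torus. norm (arg_vec s) < e} (Wmap x)"
    and "gA \<equiv> (p \<bullet> x)^2 * indicator (ball 0 e) x"
    and "h \<equiv> (2 * (norm p)^2 + 1) * (indicator (ball 0 d) x * (norm x)^2 + phi x)"
  shows "gB \<le> gA + e * h" "gA \<le> gB + e * h" "0 \<le> h"
proof -
  have h0: "0 \<le> h" unfolding h_def by (intro mult_nonneg_nonneg add_nonneg_nonneg phi_nonneg) auto
  show "0 \<le> h" by (rule h0)
  have "gB \<le> gA + e * h \<and> gA \<le> gB + e * h"
  proof (cases "norm x < e")
    case True
    then have ax: "arg_vec (Wmap x) = x" using e pi_gt3 by (intro arg_vec_Wmap) auto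
    have gB: "gB = (p \<bullet> sv x)^2" using True by (simp add: gB_def ax Wmap_torus Im_vec_Wmap)
    have gA: "gA = (p \<bullet> x)^2" using True by (simp add: gA_def)
    have "\<bar>gB - gA\<bar> \<le> 2 * (norm p)^2 * (norm x)^3" using sq_diff_bound gA gB by simp
    also have "\<dots> \<le> 2 * (norm p)^2 * (e * (norm x)^2)"
    proof (intro mult_left_mono)
      have "norm x * (norm x)^2 \<le> e * (norm x)^2" using True by (intro mult_right_mono) auto
      then show "(norm x)^3 \<le> e * (norm x)^2" by (simp add: power3_eq_cube power2_eq_square)
    qed auto
    also have "\<dots> \<le> e * h"
    proof -
      have "indicator (ball 0 d) x = (1::real)" using True e by auto
      then have "h = (2 * (norm p)^2 + 1) * ((norm x)^2 + phi x)" by (simp add: h_def)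
      moreover have "2 * (norm p)^2 * (e * (norm x)^2) \<le> e * ((2 * (norm p)^2 + 1) * ((norm x)^2 + phi x))"
        using e phi_nonneg[of x]
        by (simp add: algebra_simps mult_nonneg_nonneg add_nonneg_nonneg)
      ultimately show ?thesis by simp
    qed
    finally show ?thesis by linarith
  next
    case False
    then have gA: "gA = 0" by (simp add: gA_def)
    show ?thesis
    proof (cases "norm (arg_vec (Wmap x)) < e")
      case True
      have "pi \<le> norm x"
      proof (rule ccontr)
        assume "\<not> pi \<le> norm x"
        then have "arg_vec (Wmap x) = x" by (intro arg_vec_Wmap) auto
        then show False using True False by simp
      qed
      then have ph: "phi x = 1" by (rule phi_one)
      have gB: "gB = (p \<bullet> sv x)^2" using True by (simp add: gB_def Wmap_torus Im_vec_Wmap)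
      have "\<bar>p \<bullet> sv x\<bar> \<le> norm p * e"
        using Cauchy_Schwarz_ineq2[of p "sv x"] norm_sv_arg[of x] True
        by (meson less_imp_le mult_left_mono norm_ge_zero order_trans)
      then have "(p \<bullet> sv x)^2 \<le> (norm p * e)^2"
        by (metis abs_ge_zero power2_abs power_mono)
      also have "\<dots> \<le> e * ((norm p)^2 + 0)"
      proof -
        have "e * e \<le> e * 1" using e by (intro mult_left_mono) auto
        then have "(e * e) * (norm p)^2 \<le> e * (norm p)^2" by (intro mult_right_mono) auto
        then show ?thesis by (simp add: power2_eq_square algebra_simps)
      qed
      also have "\<dots> \<le> e * h"
      proof -
        have "(norm p)^2 + 0 \<le> (2 * (norm p)^2 + 1) * (indicator (ball 0 d) x * (norm x)^2 + 1)"
          by (simp add: algebra_simps indicator_def)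
        then show ?thesis unfolding h_def ph using e by (intro mult_left_mono) auto
      qed
      finally have "(p \<bullet> sv x)^2 \<le> e * h" .
      moreover have "0 \<le> e * h" using h0 e by simp
      moreover have "0 \<le> (p \<bullet> sv x)^2" by simp
      ultimately show ?thesis using gA gB by linarith
    next
      case False
      then have "gB = 0" by (simp add: gB_def)
      then show ?thesis using gA h0 e by simp
    qed
  qed
  then show "gB \<le> gA + e * h" "gA \<le> gB + e * h" by auto
qed


lemma sets_away: "M_away UNIV 0 M \<Longrightarrow> sets M = sets borel"
  by (simp add: M_away_def sets_restrict_UNIV)

lemma Wmap_meas_M: "M_away UNIV 0 M \<Longrightarrow> Wmap \<in> M \<rightarrow>\<^sub>M restrict_space borel torus"
  using Wmap_meas measurable_cong_sets[OF sets_away[symmetric] refl] by blast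

lemma sets_rt: "A \<in> sets (restrict_space borel torus) \<longleftrightarrow> A \<subseteq> torus \<and> A \<in> sets borel"
  by (rule sets_restrict_space_iff) (simp add: torus_borel)

lemma distr_finite:
  assumes M: "M_away UNIV 0 M" and A: "A \<in> sets (restrict_space borel torus)" and b: "bounded_away A one_t"
  shows "emeasure (distr M (restrict_space borel torus) Wmap) A < \<infinity>"
proof -
  have W: "Wmap \<in> M \<rightarrow>\<^sub>M restrict_space borel torus" by (rule Wmap_meas_M[OF M])
  have eq: "emeasure (distr M (restrict_space borel torus) Wmap) A = emeasure M (Wmap -` A \<inter> space M)"
    by (rule emeasure_distr[OF W A])
  have Bs: "Wmap -` A \<inter> space M \<in> sets M" using W A by (rule measurable_sets)
  obtain e where e: "e > 0" "\<forall>x\<in>A. e \<le> dist x one_t" using b by (auto simp: bounded_away_def)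
  have "bounded_away (Wmap -` A \<inter> space M) 0"
    unfolding bounded_away_def
  proof (intro exI[of _ e] conjI ballI)
    fix x assume "x \<in> Wmap -` A \<inter> space M"
    then have "e \<le> dist (Wmap x) one_t" using e by auto
    also have "\<dots> \<le> dist x 0" using dist_Wmap[of x] by simp
    finally show "e \<le> dist x 0" .
  qed (rule e)
  then show ?thesis using M Bs eq by (auto simp: M_away_def)
qed

lemma part_rhos:
  assumes "M_away UNIV 0 M"
  shows "M_away torus one_t (distr M (restrict_space borel torus) Wmap)"
  using distr_finite[OF assms] by (auto simp: M_away_def)

lemma part_rho:
  assumes M: "M_away UNIV 0 M"
  defines "\<rho> \<equiv> density (distr M (restrict_space borel torus) Wmap)
                 (indicator (torus - {one_t}) :: complex^'d \<Rightarrow> ennreal)"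
  shows "M_away torus one_t \<rho>" "emeasure \<rho> {one_t} = 0"
proof -
  let ?D = "distr M (restrict_space borel torus) Wmap"
  have S: "torus - {one_t} \<in> sets ?D" using torus_borel by (auto simp: sets_rt)
  have im: "(indicator (torus - {one_t}) :: complex^'d \<Rightarrow> ennreal) \<in> borel_measurable ?D"
    using S by simp
  show "M_away torus one_t \<rho>"
    unfolding M_away_def
  proof (intro conjI ballI impI)
    show "sets \<rho> = sets (restrict_space borel torus)" by (simp add: \<rho>_def)
    fix A assume A: "A \<in> sets \<rho>" and b: "bounded_away A one_t"
    then have A': "A \<in> sets (restrict_space borel torus)" by (simp add: \<rho>_def)
    have "emeasure \<rho> A = (\<integral>\<^sup>+x\<in>A. indicator (torus - {one_t}) x \<partial>?D)"
      unfolding \<rho>_def using A' by (intro emeasure_density im) simp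
    also have "\<dots> \<le> (\<integral>\<^sup>+x. indicator A x \<partial>?D)"
      by (intro nn_integral_mono) (auto simp: indicator_def)
    also have "\<dots> = emeasure ?D A" using A' by simp
    also have "\<dots> < \<infinity>" by (rule distr_finite[OF M A' b])
    finally show "emeasure \<rho> A < \<infinity>" .
  qed
  have o: "{one_t} \<in> sets ?D" using one_t_torus by (auto simp: sets_rt)
  have "emeasure \<rho> {one_t} = (\<integral>\<^sup>+x\<in>{one_t}. indicator (torus - {one_t}) x \<partial>?D)"
    unfolding \<rho>_def using o by (intro emeasure_density im) simp
  also have "\<dots> = (\<integral>\<^sup>+x. 0 \<partial>?D)"
    by (intro nn_integral_cong) (auto simp: indicator_def)
  finally show "emeasure \<rho> {one_t} = 0" by simp
qed

lemma part_weak: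
  assumes Ms: "\<forall>n. M_away UNIV 0 (Ms n)" and M: "M_away UNIV 0 M" and w: "weak_conv_away UNIV 0 Ms M"
  shows "weak_conv_away torus one_t (\<lambda>n. distr (Ms n) (restrict_space borel torus) Wmap)
          (density (distr M (restrict_space borel torus) Wmap)
                 (indicator (torus - {one_t}) :: complex^'d \<Rightarrow> ennreal))"
  unfolding weak_conv_away_def
proof (intro allI impI)
  fix f :: "complex^'d \<Rightarrow> real"
  assume fc: "continuous_on torus f" and fb: "bounded (f ` torus)"
    and fz: "\<exists>e>0. \<forall>x\<in>torus. dist x one_t < e \<longrightarrow> f x = 0"
  obtain e where e: "e > 0" "\<forall>x\<in>torus. dist x one_t < e \<longrightarrow> f x = 0" using fz by auto
  let ?g = "\<lambda>x. f (Wmap x)"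
  have gc: "continuous_on UNIV ?g"
    by (rule continuous_on_compose2[OF fc cont_Wmap]) (auto simp: Wmap_torus)
  have gb: "bounded (?g ` UNIV)"
    by (rule bounded_subset[OF fb]) (auto simp: Wmap_torus)
  have gz: "\<exists>e>0. \<forall>x\<in>UNIV. dist x 0 < e \<longrightarrow> ?g x = 0"
  proof (intro exI[of _ e] conjI ballI impI)
    fix x :: "real^'d" assume "dist x 0 < e"
    then have "dist (Wmap x) one_t < e" using dist_Wmap[of x] by simp
    then show "?g x = 0" using e Wmap_torus by blast
  qed (rule e)
  have lim: "(\<lambda>n. \<integral>x. ?g x \<partial>Ms n) \<longlonglongrightarrow> (\<integral>x. ?g x \<partial>M)"
    using w gc gb gz unfolding weak_conv_away_def by blast
  have fm: "f \<in> borel_measurable (restrict_space borel torus)"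
    by (rule borel_measurable_continuous_on_restrict[OF fc])
  have "(\<integral>x. f x \<partial>distr (Ms n) (restrict_space borel torus) Wmap) = (\<integral>x. ?g x \<partial>Ms n)" for n
    by (rule integral_distr[OF Wmap_meas_M[OF Ms[rule_format]] fm])
  moreover have "(\<integral>x. f x \<partial>density (distr M (restrict_space borel torus) Wmap)
                 (indicator (torus - {one_t}) :: complex^'d \<Rightarrow> ennreal)) = (\<integral>x. ?g x \<partial>M)"
  proof -
    let ?D = "distr M (restrict_space borel torus) Wmap"
    have S: "torus - {one_t} \<in> sets ?D" using torus_borel by (auto simp: sets_rt)
    have "(indicator (torus - {one_t}) :: complex^'d \<Rightarrow> ennreal) = (\<lambda>x. ennreal (indicator (torus - {one_t}) x))"
      by (simp add: ennreal_indicator)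
    then have "(\<integral>x. f x \<partial>density ?D (indicator (torus - {one_t}))) = 
        (\<integral>x. f x \<partial>density ?D (\<lambda>x. ennreal (indicator (torus - {one_t}) x)))" by simp
    also have "\<dots> = (\<integral>x. indicator (torus - {one_t}) x *\<^sub>R f x \<partial>?D)"
      by (rule integral_density) (use fm S in auto)
    also have "\<dots> = (\<integral>x. indicator (torus - {one_t}) (Wmap x) *\<^sub>R f (Wmap x) \<partial>M)"
      by (rule integral_distr[OF Wmap_meas_M[OF M]]) (use fm S in auto)
    also have "\<dots> = (\<integral>x. ?g x \<partial>M)"
    proof (rule Bochner_Integration.integral_cong[OF refl])
      fix x
      have "f one_t = 0" using e one_t_torus by auto
      then show "indicator (torus - {one_t}) (Wmap x) *\<^sub>R f (Wmap x) = f (Wmap x)"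
        using Wmap_torus[of x] by (auto simp: indicator_def)
    qed
    finally show ?thesis .
  qed
  ultimately show "(\<lambda>n. \<integral>x. f x \<partial>distr (Ms n) (restrict_space borel torus) Wmap)
     \<longlonglongrightarrow> (\<integral>x. f x \<partial>density (distr M (restrict_space borel torus) Wmap)
                 (indicator (torus - {one_t})))" using lim by simp
qed


lemma bound_ball:
  fixes Ms :: "nat \<Rightarrow> (real^'d) measure"
  assumes Ms: "\<forall>n. M_away UNIV 0 (Ms n)"
    and q: "\<forall>u. quad_limit (\<lambda>x. (u \<bullet> x)^2) (\<lambda>\<epsilon>. ball 0 \<epsilon>) Ms (Q u)"
  shows "\<exists>d>0. d \<le> 1 \<and> (\<exists>K. eventually (\<lambda>n. (\<integral>\<^sup>+x. ennreal (indicator (ball 0 d) x * (norm x)^2) \<partial>Ms n) \<le> ennreal K) sequentially)"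
proof -
  let ?I = "\<lambda>j e n. \<integral>\<^sup>+x\<in>ball 0 e. ennreal ((axis j 1 \<bullet> x)^2) \<partial>Ms n"
  have "\<forall>\<^sub>F e in at_right 0. \<forall>j. limsup (?I j e) < ennreal (Q (axis j 1) + 1)"
  proof (rule eventually_all_finite)
    fix j
    have l: "((\<lambda>e. limsup (?I j e)) \<longlongrightarrow> ennreal (Q (axis j 1))) (at_right 0)"
      and q0: "0 \<le> Q (axis j 1)"
      using q[rule_format, of "axis j 1"] by (auto simp: quad_limit_def)
    have "ennreal (Q (axis j 1)) < ennreal (Q (axis j 1) + 1)" using q0 by (simp add: ennreal_lessI)
    from order_tendstoD(2)[OF l this] show "\<forall>\<^sub>F e in at_right 0. limsup (?I j e) < ennreal (Q (axis j 1) + 1)" .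
  qed
  then obtain b where b: "b > 0" "\<And>e. 0 < e \<Longrightarrow> e < b \<Longrightarrow> \<forall>j. limsup (?I j e) < ennreal (Q (axis j 1) + 1)"
    unfolding eventually_at_right_field by auto
  define d where "d = min (b/2) 1"
  have d: "0 < d" "d < b" "d \<le> 1" using b by (auto simp: d_def)
  have "\<forall>\<^sub>F n in sequentially. \<forall>j. ?I j d n < ennreal (Q (axis j 1) + 1)"
    by (intro eventually_all_finite Limsup_lessD) (use b(2)[OF d(1,2)] in auto)
  then have "\<forall>\<^sub>F n in sequentially. (\<integral>\<^sup>+x. ennreal (indicator (ball 0 d) x * (norm x)^2) \<partial>Ms n) \<le> ennreal (\<Sum>j\<in>UNIV. Q (axis j 1) + 1)"
  proof (rule eventually_mono)
    fix n assume n: "\<forall>j. ?I j d n < ennreal (Q (axis j 1) + 1)"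
    have "(\<integral>\<^sup>+x. ennreal (indicator (ball 0 d) x * (norm x)^2) \<partial>Ms n) = (\<integral>\<^sup>+x. (\<Sum>j\<in>UNIV. ennreal ((axis j 1 \<bullet> x)^2) * indicator (ball 0 d) x) \<partial>Ms n)"
    proof (rule nn_integral_cong)
      fix x :: "real^'d"
      have "(\<Sum>j\<in>UNIV. ennreal ((axis j 1 \<bullet> x)^2) * indicator (ball 0 d) x) = 
            (\<Sum>j\<in>UNIV. ennreal ((x $ j)^2 * indicator (ball 0 d) x))"
        by (intro sum.cong refl) (simp add: inner_axis' ennreal_mult'' ennreal_indicator)
      also have "\<dots> = ennreal (\<Sum>j\<in>UNIV. (x $ j)^2 * indicator (ball 0 d) x)"
        by (rule sum_ennreal) auto
      also have "\<dots> = ennreal (indicator (ball 0 d) x * (norm x)^2)"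
        by (simp add: norm_sq_sum sum_distrib_right mult.commute)
      finally show "ennreal (indicator (ball 0 d) x * (norm x)^2) = (\<Sum>j\<in>UNIV. ennreal ((axis j 1 \<bullet> x)^2) * indicator (ball 0 d) x)" by simp
    qed
    also have "\<dots> = (\<Sum>j\<in>UNIV. ?I j d n)"
    proof (rule nn_integral_sum)
      fix j
      have [measurable]: "ball (0::real^'d) d \<in> sets borel" by simp
      have [measurable]: "(\<lambda>x::real^'d. axis j 1 \<bullet> x) \<in> borel_measurable borel"
        by (intro borel_measurable_continuous_onI continuous_intros)
      have "(\<lambda>x. ennreal ((axis j 1 \<bullet> x)^2) * indicator (ball 0 d) x) \<in> borel_measurable borel"
        by (intro borel_measurable_times_ennreal borel_measurable_indicator measurable_compose[OF _ measurable_ennreal]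
          borel_measurable_continuous_onI continuous_intros) simp
      then show "(\<lambda>x. ennreal ((axis j 1 \<bullet> x)^2) * indicator (ball 0 d) x) \<in> borel_measurable (Ms n)"
        using measurable_cong_sets[OF sets_away[OF Ms[rule_format, of n], symmetric] refl] by blast
    qed
    also have "\<dots> \<le> (\<Sum>j\<in>UNIV. ennreal (Q (axis j 1) + 1))"
      by (intro sum_mono less_imp_le n[rule_format])
    also have "\<dots> = ennreal (\<Sum>j\<in>UNIV. Q (axis j 1) + 1)"
    proof (rule sum_ennreal)
      fix j :: 'd
      have "0 \<le> Q (axis j 1)" using q[rule_format, of "axis j 1"] by (simp add: quad_limit_def)
      then show "0 \<le> Q (axis j 1) + 1" by simp
    qed
    finally show "(\<integral>\<^sup>+x. ennreal (indicator (ball 0 d) x * (norm x)^2) \<partial>Ms n) \<le> ennreal (\<Sum>j\<in>UNIV. Q (axis j 1) + 1)" .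
  qed
  then show ?thesis using d by blast
qed


lemma bound_phi:
  fixes Ms :: "nat \<Rightarrow> (real^'d) measure"
  assumes Ms: "\<forall>n. M_away UNIV 0 (Ms n)" and w: "weak_conv_away UNIV 0 Ms M"
  shows "\<exists>K. eventually (\<lambda>n. (\<integral>\<^sup>+x. ennreal (phi x) \<partial>Ms n) \<le> ennreal K) sequentially"
proof -
  have pb: "bounded (phi ` UNIV)"
    by (rule bounded_subset[of "cball 0 1"]) (auto simp: phi_nonneg phi_le1 abs_le_iff)
  have pz: "\<exists>e>0. \<forall>x\<in>UNIV. dist x 0 < e \<longrightarrow> phi x = 0"
    by (intro exI[of _ 1]) (auto intro: phi_zero)
  have lim: "(\<lambda>n. \<integral>x. phi x \<partial>Ms n) \<longlonglongrightarrow> (\<integral>x. phi x \<partial>M)"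
    using w phi_cont pb pz unfolding weak_conv_away_def by blast
  have ev: "\<forall>\<^sub>F n in sequentially. (\<integral>x. phi x \<partial>Ms n) < (\<integral>x. phi x \<partial>M) + 1"
    by (rule order_tendstoD(2)[OF lim]) simp
  have "\<forall>\<^sub>F n in sequentially. (\<integral>\<^sup>+x. ennreal (phi x) \<partial>Ms n) \<le> ennreal ((\<integral>x. phi x \<partial>M) + 1)"
  proof (rule eventually_mono[OF ev])
    fix n assume n: "(\<integral>x. phi x \<partial>Ms n) < (\<integral>x. phi x \<partial>M) + 1"
    have sb: "sets (Ms n) = sets borel" by (rule sets_away[OF Ms[rule_format]])
    let ?A = "{x::real^'d. 1 \<le> norm x}"
    have cA: "closed ?A" by (intro closed_Collect_le continuous_intros)
    have As: "?A \<in> sets (Ms n)" using borel_closed[OF cA] sb by simp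
    have "bounded_away ?A 0" unfolding bounded_away_def by (intro exI[of _ 1]) auto
    then have Af: "emeasure (Ms n) ?A < \<infinity>" using Ms As by (auto simp: M_away_def)
    have pm: "phi \<in> borel_measurable (Ms n)"
      using borel_measurable_continuous_onI[OF phi_cont] measurable_cong_sets[OF sb[symmetric] refl] by blast
    have int: "integrable (Ms n) phi"
    proof (rule Bochner_Integration.integrable_bound[OF integrable_real_indicator[OF As Af] pm])
      show "AE x in Ms n. norm (phi x) \<le> norm (indicator ?A x :: real)"
      proof (rule AE_I2)
        fix x :: "real^'d"
        show "norm (phi x) \<le> norm (indicator ?A x :: real)"
        proof (cases "1 \<le> norm x")
          case True then show ?thesis using phi_nonneg[of x] phi_le1[of x] by simp
        next
          case False then show ?thesis using phi_zero[of x] by simp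
        qed
      qed
    qed
    have "(\<integral>\<^sup>+x. ennreal (phi x) \<partial>Ms n) = ennreal (\<integral>x. phi x \<partial>Ms n)"
      by (rule nn_integral_eq_integral[OF int]) (simp add: phi_nonneg)
    also have "\<dots> \<le> ennreal ((\<integral>x. phi x \<partial>M) + 1)" using n by (intro ennreal_leI) simp
    finally show "(\<integral>\<^sup>+x. ennreal (phi x) \<partial>Ms n) \<le> ennreal ((\<integral>x. phi x \<partial>M) + 1)" .
  qed
  then show ?thesis by blast
qed


lemma Limsup_add_const_enn:
  fixes c :: ennreal
  shows "limsup (\<lambda>n. f n + c) = limsup f + c"
  using Limsup_const_add[of sequentially c f] by (simp add: add.commute)

lemma Liminf_add_const_enn:
  fixes c :: ennreal
  shows "liminf (\<lambda>n. f n + c) = liminf f + c"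
  using Liminf_add_const[of sequentially f c] by simp

lemma part_quad:
  fixes Ms :: "nat \<Rightarrow> (real^'d) measure" and p :: "real^'d"
  assumes Ms: "\<forall>n. M_away UNIV 0 (Ms n)" and w: "weak_conv_away UNIV 0 Ms M"
    and q: "\<forall>u. quad_limit (\<lambda>x. (u \<bullet> x)^2) (\<lambda>\<epsilon>. ball 0 \<epsilon>) Ms (Q u)"
  shows "quad_limit (\<lambda>s. (p \<bullet> Im_vec s)^2) (\<lambda>\<epsilon>. {s\<in>torus. norm (arg_vec s) < \<epsilon>})
           (\<lambda>n. distr (Ms n) (restrict_space borel torus) Wmap) (Q p)"
proof -
  obtain d K1 where d: "0 < d" "d \<le> 1"
    and K1: "eventually (\<lambda>n. (\<integral>\<^sup>+x. ennreal (indicator (ball 0 d) x * (norm x)^2) \<partial>Ms n) \<le> ennreal K1) sequentially"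
    using bound_ball[OF Ms q] by blast
  obtain K2 where K2: "eventually (\<lambda>n. (\<integral>\<^sup>+x. ennreal (phi x) \<partial>Ms n) \<le> ennreal K2) sequentially"
    using bound_phi[OF Ms w] by blast
  have mb: "f \<in> borel_measurable (Ms n)" if "f \<in> borel_measurable borel" for f :: "real^'d \<Rightarrow> ennreal" and n
    using that measurable_cong_sets[OF sets_away[OF Ms[rule_format, of n], symmetric] refl] by blast
  define c where "c = 2 * (norm p)^2 + 1"
  have c0: "0 \<le> c" by (simp add: c_def)
  define h where "h x = c * (indicator (ball 0 d) x * (norm x)^2 + phi x)" for x :: "real^'d"
  define Mr where "Mr = c * (max 0 K1 + max 0 K2)"
  have hm1: "(\<lambda>x::real^'d. ennreal (indicator (ball 0 d) x * (norm x)^2)) \<in> borel_measurable borel"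
    by (intro measurable_compose[OF _ measurable_ennreal] borel_measurable_times borel_measurable_indicator
          borel_measurable_continuous_onI continuous_intros) simp
  have hm2: "(\<lambda>x::real^'d. ennreal (phi x)) \<in> borel_measurable borel"
    by (intro measurable_compose[OF _ measurable_ennreal] borel_measurable_continuous_onI phi_cont)
  have H: "eventually (\<lambda>n. (\<integral>\<^sup>+x. ennreal (h x) \<partial>Ms n) \<le> ennreal Mr) sequentially"
    using K1 K2
  proof eventually_elim
    case (elim n)
    have "(\<integral>\<^sup>+x. ennreal (h x) \<partial>Ms n) = (\<integral>\<^sup>+x. ennreal c * (ennreal (indicator (ball 0 d) x * (norm x)^2) + ennreal (phi x)) \<partial>Ms n)"
      by (intro nn_integral_cong) (simp add: h_def c0 ennreal_mult ennreal_plus phi_nonneg)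
    also have "\<dots> = ennreal c * ((\<integral>\<^sup>+x. ennreal (indicator (ball 0 d) x * (norm x)^2) \<partial>Ms n) + (\<integral>\<^sup>+x. ennreal (phi x) \<partial>Ms n))"
    proof -
      have m: "(\<lambda>x. ennreal (indicator (ball 0 d) x * (norm x)^2) + ennreal (phi x)) \<in> borel_measurable (Ms n)"
        by (intro borel_measurable_add mb hm1 hm2)
      show ?thesis
        by (subst nn_integral_cmult[OF m]) (subst nn_integral_add[OF mb[OF hm1] mb[OF hm2]], rule refl)
    qed
    also have "\<dots> \<le> ennreal c * (ennreal (max 0 K1) + ennreal (max 0 K2))"
    proof -
      have a1: "ennreal K1 \<le> ennreal (max 0 K1)" by (rule ennreal_leI) simp
      have a2: "ennreal K2 \<le> ennreal (max 0 K2)" by (rule ennreal_leI) simp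
      have b1: "(\<integral>\<^sup>+x. ennreal (indicator (ball 0 d) x * (norm x)^2) \<partial>Ms n) \<le> ennreal (max 0 K1)"
        using elim(1) a1 by (rule order_trans)
      have b2: "(\<integral>\<^sup>+x. ennreal (phi x) \<partial>Ms n) \<le> ennreal (max 0 K2)"
        using elim(2) a2 by (rule order_trans)
      show ?thesis by (intro mult_left_mono add_mono b1 b2) simp
    qed
    also have "\<dots> = ennreal Mr" by (simp add: Mr_def c0 ennreal_mult ennreal_plus)
    finally show ?case .
  qed
  define U where "U e = {s\<in>(torus :: (complex^'d) set). norm (arg_vec s) < e}" for e :: real
  have Ub: "U e \<in> sets borel" for e
  proof -
    have "U e = torus \<inter> ((\<lambda>s. norm (arg_vec s)) -` {..<e} \<inter> space borel)" by (auto simp: U_def)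
    also have "\<dots> \<in> sets borel"
      by (intro sets.Int torus_borel measurable_sets[OF arg_norm_meas]) simp
    finally show ?thesis .
  qed
  define FB where "FB e s = ennreal ((p \<bullet> Im_vec s)^2) * indicator (U e) s" for e s
  have FBb: "FB e \<in> borel_measurable borel" for e
    unfolding FB_def Im_vec_def
    by (intro borel_measurable_times_ennreal borel_measurable_indicator Ub measurable_compose[OF _ measurable_ennreal]
          borel_measurable_continuous_onI continuous_intros continuous_on_vec_lambda)
  have FBr: "FB e \<in> borel_measurable (restrict_space borel torus)" for e
    by (rule measurable_restrict_space1[OF FBb])
  define FA where "FA e x = ennreal ((p \<bullet> x)^2) * indicator (ball 0 e) x" for e x
  have FAb: "FA e \<in> borel_measurable borel" for e
    unfolding FA_def
    by (intro borel_measurable_times_ennreal borel_measurable_indicator measurable_compose[OF _ measurable_ennreal]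
          borel_measurable_continuous_onI continuous_intros) simp
  define A where "A e n = (\<integral>\<^sup>+x. FA e x \<partial>Ms n)" for e n
  define B where "B e n = (\<integral>\<^sup>+x. FB e (Wmap x) \<partial>Ms n)" for e n
  have Bdistr: "(\<integral>\<^sup>+s. FB e s \<partial>distr (Ms n) (restrict_space borel torus) Wmap) = B e n" for e n
    unfolding B_def
    by (rule nn_integral_distr[OF Wmap_meas_M[OF Ms[rule_format]]]) (use FBr in simp)
  have FBWm: "(\<lambda>x. FB e (Wmap x)) \<in> borel_measurable (Ms n)" for e n
    using measurable_comp[OF Wmap_meas_M[OF Ms[rule_format, of n]] FBr[of e]] by (simp add: comp_def)
  have pw: "FB e (Wmap x) \<le> FA e x + ennreal e * ennreal (h x) \<and> FA e x \<le> FB e (Wmap x) + ennreal e * ennreal (h x)"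
    if e: "0 < e" "e < d" for e x
  proof -
    note pt = pointwise[OF e d(2), of p x]
    have hh: "h x = (2 * (norm p)^2 + 1) * (indicator (ball 0 d) x * (norm x)^2 + phi x)"
      by (simp add: h_def c_def)
    have eB: "FB e (Wmap x) = ennreal ((p \<bullet> Im_vec (Wmap x))^2 * indicator {s\<in>torus. norm (arg_vec s) < e} (Wmap x))"
      by (simp add: FB_def U_def ennreal_mult'' ennreal_indicator)
    have eA: "FA e x = ennreal ((p \<bullet> x)^2 * indicator (ball 0 e) x)"
      by (simp add: FA_def ennreal_mult'' ennreal_indicator)
    have h0: "0 \<le> h x" using pt(3) hh by simp
    have s1: "ennreal (a + e * h x) = ennreal a + ennreal e * ennreal (h x)" if "0 \<le> a" for a
      using that e h0 by (simp add: ennreal_plus ennreal_mult)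
    define gB where "gB = (p \<bullet> Im_vec (Wmap x))^2 * indicator {s\<in>torus. norm (arg_vec s) < e} (Wmap x)"
    define gA where "gA = (p \<bullet> x)^2 * (indicator (ball 0 e) x :: real)"
    have gB0: "0 \<le> gB" by (simp add: gB_def)
    have gA0: "0 \<le> gA" by (simp add: gA_def)
    have i1: "gB \<le> gA + e * h x" using pt(1) unfolding hh[symmetric] gA_def gB_def .
    have i2: "gA \<le> gB + e * h x" using pt(2) unfolding hh[symmetric] gA_def gB_def .
    have "FB e (Wmap x) = ennreal gB" by (simp add: eB gB_def)
    also have "\<dots> \<le> ennreal (gA + e * h x)" by (rule ennreal_leI[OF i1])
    also have "\<dots> = ennreal gA + ennreal e * ennreal (h x)" by (rule s1[OF gA0])
    also have "\<dots> = FA e x + ennreal e * ennreal (h x)" by (simp add: eA gA_def)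
    finally have r1: "FB e (Wmap x) \<le> FA e x + ennreal e * ennreal (h x)" .
    have "FA e x = ennreal gA" by (simp add: eA gA_def)
    also have "\<dots> \<le> ennreal (gB + e * h x)" by (rule ennreal_leI[OF i2])
    also have "\<dots> = ennreal gB + ennreal e * ennreal (h x)" by (rule s1[OF gB0])
    also have "\<dots> = FB e (Wmap x) + ennreal e * ennreal (h x)" by (simp add: eB gB_def)
    finally have r2: "FA e x \<le> FB e (Wmap x) + ennreal e * ennreal (h x)" .
    show ?thesis using r1 r2 by blast
  qed
  have ineq: "eventually (\<lambda>n. B e n \<le> A e n + ennreal (e * Mr) \<and> A e n \<le> B e n + ennreal (e * Mr)) sequentially"
    if e: "0 < e" "e < d" for e
    using H
  proof eventually_elim
    case (elim n)
    have eM: "ennreal e * (\<integral>\<^sup>+x. ennreal (h x) \<partial>Ms n) \<le> ennreal (e * Mr)"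
    proof -
      have "ennreal e * (\<integral>\<^sup>+x. ennreal (h x) \<partial>Ms n) \<le> ennreal e * ennreal Mr"
        by (rule mult_left_mono[OF elim]) simp
      also have "\<dots> = ennreal (e * Mr)" using e by (simp add: ennreal_mult')
      finally show ?thesis .
    qed
    have hm: "(\<lambda>x. ennreal e * ennreal (h x)) \<in> borel_measurable (Ms n)"
      unfolding h_def by (intro mb borel_measurable_times_ennreal measurable_compose[OF _ measurable_ennreal]
          borel_measurable_times borel_measurable_add borel_measurable_indicator
          borel_measurable_continuous_onI continuous_intros phi_cont) simp_all
    have hm': "(\<lambda>x. ennreal (h x)) \<in> borel_measurable (Ms n)"
      unfolding h_def by (intro mb measurable_compose[OF _ measurable_ennreal]
          borel_measurable_times borel_measurable_add borel_measurable_indicator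
          borel_measurable_continuous_onI continuous_intros phi_cont) simp_all
    have cm: "(\<integral>\<^sup>+x. ennreal e * ennreal (h x) \<partial>Ms n) = ennreal e * (\<integral>\<^sup>+x. ennreal (h x) \<partial>Ms n)"
      by (rule nn_integral_cmult[OF hm'])
    have "B e n \<le> (\<integral>\<^sup>+x. FA e x + ennreal e * ennreal (h x) \<partial>Ms n)"
      unfolding B_def using pw[OF e] by (intro nn_integral_mono) auto
    also have "\<dots> = A e n + ennreal e * (\<integral>\<^sup>+x. ennreal (h x) \<partial>Ms n)"
      unfolding A_def cm[symmetric] by (rule nn_integral_add[OF mb[OF FAb] hm])
    finally have 1: "B e n \<le> A e n + ennreal (e * Mr)" using eM by (meson add_left_mono order_trans)
    have "A e n \<le> (\<integral>\<^sup>+x. FB e (Wmap x) + ennreal e * ennreal (h x) \<partial>Ms n)"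
      unfolding A_def using pw[OF e] by (intro nn_integral_mono) auto
    also have "\<dots> = B e n + ennreal e * (\<integral>\<^sup>+x. ennreal (h x) \<partial>Ms n)"
      unfolding B_def cm[symmetric] by (rule nn_integral_add[OF FBWm hm])
    finally have 2: "A e n \<le> B e n + ennreal (e * Mr)" using eM by (meson add_left_mono order_trans)
    show ?case using 1 2 by blast
  qed
  have qp: "0 \<le> Q p" "((\<lambda>e. limsup (\<lambda>n. \<integral>\<^sup>+x\<in>ball 0 e. ennreal ((p \<bullet> x)^2) \<partial>Ms n)) \<longlongrightarrow> ennreal (Q p)) (at_right 0)"
    "((\<lambda>e. liminf (\<lambda>n. \<integral>\<^sup>+x\<in>ball 0 e. ennreal ((p \<bullet> x)^2) \<partial>Ms n)) \<longlongrightarrow> ennreal (Q p)) (at_right 0)"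
    using q[rule_format, of p] by (simp_all add: quad_limit_def)
  have Aeq: "(\<lambda>e n. \<integral>\<^sup>+x\<in>ball 0 e. ennreal ((p \<bullet> x)^2) \<partial>Ms n) = A"
    by (simp add: A_def FA_def fun_eq_iff)
  have lsA: "((\<lambda>e. limsup (A e)) \<longlongrightarrow> ennreal (Q p)) (at_right 0)"
    and liA: "((\<lambda>e. liminf (A e)) \<longlongrightarrow> ennreal (Q p)) (at_right 0)"
    unfolding A_def FA_def by (rule qp(2), rule qp(3))
  have Beq: "(\<integral>\<^sup>+s\<in>{s\<in>torus. norm (arg_vec s) < e}. ennreal ((p \<bullet> Im_vec s)^2) \<partial>distr (Ms n) (restrict_space borel torus) Wmap) = B e n" for e n
    using Bdistr[where e=e and n=n] by (simp add: FB_def U_def)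
  have z: "((\<lambda>e. ennreal (e * Mr)) \<longlongrightarrow> 0) (at_right 0)"
  proof -
    have "((\<lambda>e::real. e * Mr) \<longlongrightarrow> 0 * Mr) (at_right 0)"
      by (intro tendsto_intros)
    from tendsto_ennrealI[OF this] show ?thesis by simp
  qed
  have evd: "\<forall>\<^sub>F e in at_right 0. 0 < e \<and> e < d"
    unfolding eventually_at_right_field using d by blast
  have bounds: "limsup (A e) - ennreal (e * Mr) \<le> limsup (B e) \<and> limsup (B e) \<le> limsup (A e) + ennreal (e * Mr)
      \<and> liminf (A e) - ennreal (e * Mr) \<le> liminf (B e) \<and> liminf (B e) \<le> liminf (A e) + ennreal (e * Mr)"
    if e: "0 < e \<and> e < d" for e
  proof -
    have ev: "eventually (\<lambda>n. B e n \<le> A e n + ennreal (e * Mr)) sequentially"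
      "eventually (\<lambda>n. A e n \<le> B e n + ennreal (e * Mr)) sequentially"
      using ineq[of e] e by (auto elim: eventually_mono)
    have 1: "limsup (B e) \<le> limsup (A e) + ennreal (e * Mr)"
      using Limsup_mono[OF ev(1)] by (simp add: Limsup_add_const_enn)
    have 2: "limsup (A e) \<le> limsup (B e) + ennreal (e * Mr)"
      using Limsup_mono[OF ev(2)] by (simp add: Limsup_add_const_enn)
    have 3: "liminf (B e) \<le> liminf (A e) + ennreal (e * Mr)"
      using Liminf_mono[OF ev(1)] by (simp add: Liminf_add_const_enn)
    have 4: "liminf (A e) \<le> liminf (B e) + ennreal (e * Mr)"
      using Liminf_mono[OF ev(2)] by (simp add: Liminf_add_const_enn)
    show ?thesis using 1 2 3 4 by (simp add: ennreal_minus_le_iff add.commute)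
  qed
  have "((\<lambda>e. limsup (B e)) \<longlongrightarrow> ennreal (Q p)) (at_right 0)"
  proof (rule tendsto_sandwich)
    show "\<forall>\<^sub>F e in at_right 0. limsup (A e) - ennreal (e * Mr) \<le> limsup (B e)"
      using evd by eventually_elim (use bounds in blast)
    show "\<forall>\<^sub>F e in at_right 0. limsup (B e) \<le> limsup (A e) + ennreal (e * Mr)"
      using evd by eventually_elim (use bounds in blast)
    show "((\<lambda>e. limsup (A e) - ennreal (e * Mr)) \<longlongrightarrow> ennreal (Q p)) (at_right 0)"
      using tendsto_diff_ennreal[OF lsA z] by simp
    show "((\<lambda>e. limsup (A e) + ennreal (e * Mr)) \<longlongrightarrow> ennreal (Q p)) (at_right 0)"
      using tendsto_add[OF lsA z] by simp
  qed
  moreover have "((\<lambda>e. liminf (B e)) \<longlongrightarrow> ennreal (Q p)) (at_right 0)"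
  proof (rule tendsto_sandwich)
    show "\<forall>\<^sub>F e in at_right 0. liminf (A e) - ennreal (e * Mr) \<le> liminf (B e)"
      using evd by eventually_elim (use bounds in blast)
    show "\<forall>\<^sub>F e in at_right 0. liminf (B e) \<le> liminf (A e) + ennreal (e * Mr)"
      using evd by eventually_elim (use bounds in blast)
    show "((\<lambda>e. liminf (A e) - ennreal (e * Mr)) \<longlongrightarrow> ennreal (Q p)) (at_right 0)"
      using tendsto_diff_ennreal[OF liA z] by simp
    show "((\<lambda>e. liminf (A e) + ennreal (e * Mr)) \<longlongrightarrow> ennreal (Q p)) (at_right 0)"
      using tendsto_add[OF liA z] by simp
  qed
  ultimately show ?thesis unfolding quad_limit_def Beq using qp(1) by simp
qed


theorem proposition4p4:
  fixes \<tau>s :: "nat \<Rightarrow> (real^'d) measure" and \<tau> :: "(real^'d) measure"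
    and Q :: "real^'d \<Rightarrow> real"
  assumes "\<forall>n. M_away UNIV 0 (\<tau>s n)"
    and "M_away UNIV 0 \<tau>" and "emeasure \<tau> {0} = 0" and "weak_conv_away UNIV 0 \<tau>s \<tau>"
    and "\<forall>u. quad_limit (\<lambda>x. (u \<bullet> x)^2) (\<lambda>\<epsilon>. ball 0 \<epsilon>) \<tau>s (Q u)"
  defines "\<rho>s \<equiv> \<lambda>n. distr (\<tau>s n) (restrict_space borel torus) Wmap"
    and "\<rho> \<equiv> density (distr \<tau> (restrict_space borel torus) Wmap)
                 (indicator (torus - {one_t}) :: complex^'d \<Rightarrow> ennreal)"
  shows "(\<forall>n. M_away torus one_t (\<rho>s n)) \<and> M_away torus one_t \<rho> \<and> emeasure \<rho> {one_t} = 0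
      \<and> weak_conv_away torus one_t \<rho>s \<rho>
      \<and> (\<forall>p::real^'d. (\<forall>j. p$j \<in> \<int>) \<longrightarrow>
           quad_limit (\<lambda>s. (p \<bullet> Im_vec s)^2) (\<lambda>\<epsilon>. {s\<in>torus. norm (arg_vec s) < \<epsilon>}) \<rho>s (Q p))"
  proof -
  have 1: "\<forall>n. M_away torus one_t (\<rho>s n)"
    unfolding \<rho>s_def using assms(1) part_rhos by blast
  have 2: "M_away torus one_t \<rho>" "emeasure \<rho> {one_t} = 0"
    unfolding \<rho>_def by (rule part_rho[OF assms(2)])+
  have 3: "weak_conv_away torus one_t \<rho>s \<rho>"
    unfolding \<rho>s_def \<rho>_def by (rule part_weak[OF assms(1,2,4)])
  have 4: "\<forall>p::real^'d. (\<forall>j. p$j \<in> \<int>) \<longrightarrow>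
           quad_limit (\<lambda>s. (p \<bullet> Im_vec s)^2) (\<lambda>\<epsilon>. {s\<in>torus. norm (arg_vec s) < \<epsilon>}) \<rho>s (Q p)"
    unfolding \<rho>s_def using part_quad[OF assms(1,4,5)] by blast
  show ?thesis using 1 2 3 4 by blast
qed

end
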